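(* Let a pairwise majority rule be $\lambda$-bounded, let $Z^*$ be a point of the metric space minimizing $SC$ over the whole space, and let $\delta_I=SC(P)/\min_{Z\in\mathcal C}SC(Z)$ be the distortion of the selected candidate $P$, assumed $>1$. (i) If $|\mathcal C|=2$ and $P$ wins under the rule, then $SC(P)/SC(Z^* )\le\frac{\lambda\delta_I}{\delta_I-1}$. (ii) If $\mathcal C$ is arbitrary and $P$ is in the uncovered set of the pairwise majority graph formed by the rule, then $SC(P)/SC(Z^* )\le\frac{2\lambda\delta_I}{\delta_I-1}$.
   Context: Voters $N$ and candidates $\mathcal C$ are points of an arbitrary metric space $(X,d)$; $SC(Y)=\sum_{i\in N}d(i,Y)$ for any $Y\in X$. A pairwise majority rule decides, for each pair of candidates, which one beats the other. It is $\lambda$-bounded if whenever $P$ beats $Q$ we have $SC(P)\le SC(Q)+\lambda\,SC(Z)$ for every point $Z\in X$. A candidate $P$ is in the uncovered set of the resulting graph if for every other candidate $Z$, either $P$ beats $Z$, or there is $Y$ with $P$ beating $Y$ and $Y$ beating $Z$. *)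

theory Defs
  imports "HOL-Analysis.Analysis"
begin

text \<open>Voters are indexed by a finite set N, voter i sits at point loc i of the metric space.\<close>
definition SC :: "'v set \<Rightarrow> ('v \<Rightarrow> 'a::metric_space) \<Rightarrow> 'a \<Rightarrow> real" where
  "SC N loc Y = (\<Sum>i\<in>N. dist (loc i) Y)"

definition pairwise_majority_rule :: "'a set \<Rightarrow> ('a \<Rightarrow> 'a \<Rightarrow> bool) \<Rightarrow> bool" where
  "pairwise_majority_rule C beats \<longleftrightarrow>
     (\<forall>P Q. beats P Q \<longrightarrow> P \<in> C \<and> Q \<in> C \<and> P \<noteq> Q) \<and>
     (\<forall>P\<in>C. \<forall>Q\<in>C. P \<noteq> Q \<longrightarrow> (beats P Q \<longleftrightarrow> \<not> beats Q P))"

definition lambda_bounded ::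
  "'v set \<Rightarrow> ('v \<Rightarrow> 'a::metric_space) \<Rightarrow> ('a \<Rightarrow> 'a \<Rightarrow> bool) \<Rightarrow> real \<Rightarrow> bool" where
  "lambda_bounded N loc beats lam \<longleftrightarrow>
     (\<forall>P Q. beats P Q \<longrightarrow> (\<forall>Z. SC N loc P \<le> SC N loc Q + lam * SC N loc Z))"

definition uncovered :: "'a set \<Rightarrow> ('a \<Rightarrow> 'a \<Rightarrow> bool) \<Rightarrow> 'a \<Rightarrow> bool" where
  "uncovered C beats P \<longleftrightarrow> P \<in> C \<and>
     (\<forall>Z\<in>C. Z \<noteq> P \<longrightarrow> beats P Z \<or> (\<exists>Y\<in>C. beats P Y \<and> beats Y Z))"

definition distortion_I :: "'v set \<Rightarrow> ('v \<Rightarrow> 'a::metric_space) \<Rightarrow> 'a set \<Rightarrow> 'a \<Rightarrow> real" where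
  "distortion_I N loc C P = SC N loc P / Min (SC N loc ` C)"

end

theory Submission
  imports Defs
begin

lemma core:
  fixes a m k s :: real
  assumes "0 < m" "m < a" "a \<le> m + k * s" "0 \<le> s"
  shows "a / s \<le> k * (a / m) / (a / m - 1)"
proof -
  have ks: "k * s \<ge> a - m" using assms by linarith
  have sp: "s > 0" using ks assms by (cases "s = 0") auto
  have k: "k > 0"
  proof (rule ccontr)
    assume "\<not> k > 0" then have "k * s \<le> 0" using sp by (simp add: mult_nonpos_nonneg)
    then show False using ks assms by linarith
  qed
  have am: "a - m > 0" using assms by simp
  have e: "k * (a / m) / (a / m - 1) = k * a / (a - m)"
  proof -
    have "a / m - 1 = (a - m) / m" using assms by (simp add: diff_divide_distrib)
    then show ?thesis using assms by simp
  qed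
  have "a * (a - m) \<le> a * (k * s)" using ks assms by (intro mult_left_mono) auto
  then have "a * (a - m) \<le> (k * a) * s" by (simp add: algebra_simps)
  then have "a / s \<le> (k * a) / (a - m)" using sp am by (simp add: divide_le_eq le_divide_eq mult.commute)
  then show ?thesis unfolding e .
qed

theorem mainTheorem13:
  fixes N :: "'v set" and loc :: "'v \<Rightarrow> 'a::metric_space" and C :: "'a set"
    and beats :: "'a \<Rightarrow> 'a \<Rightarrow> bool" and lam :: real and Zs P :: 'a
  assumes "finite N" and "finite C" and "C \<noteq> {}"
    and "pairwise_majority_rule C beats"
    and "lambda_bounded N loc beats lam"
    and "\<forall>Z. SC N loc Zs \<le> SC N loc Z"
    and "P \<in> C"
    and "distortion_I N loc C P > 1"
  shows "(card C = 2 \<and> (\<forall>Q\<in>C. Q \<noteq> P \<longrightarrow> beats P Q) \<longrightarrow>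
            SC N loc P / SC N loc Zs \<le>
              lam * distortion_I N loc C P / (distortion_I N loc C P - 1))
       \<and> (uncovered C beats P \<longrightarrow>
            SC N loc P / SC N loc Zs \<le>
              2 * lam * distortion_I N loc C P / (distortion_I N loc C P - 1))"
proof -
  define m where "m = Min (SC N loc ` C)"
  obtain Q where Q: "Q \<in> C" "SC N loc Q = m"
  proof -
    have "m \<in> SC N loc ` C" unfolding m_def using assms(2,3) by (intro Min_in) auto
    then show ?thesis using that by auto
  qed
  have nn: "\<And>Y. SC N loc Y \<ge> 0" unfolding SC_def by (simp add: sum_nonneg)
  have mle: "\<And>Y. Y \<in> C \<Longrightarrow> m \<le> SC N loc Y" unfolding m_def using assms(2) by simp
  have d: "distortion_I N loc C P = SC N loc P / m" unfolding distortion_I_def m_def ..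
  have mpos: "m > 0"
  proof (rule ccontr)
    assume "\<not> m > 0" then have "m = 0" using nn[of Q] Q by linarith
    then show False using assms(8) d by simp
  qed
  have Pgt: "SC N loc P > m" using assms(8) d mpos by (simp add: field_simps)
  have QP: "Q \<noteq> P" using Pgt Q by auto
  have sZ: "SC N loc Zs \<ge> 0" using nn by simp
  have lb: "\<And>X Y. beats X Y \<Longrightarrow> SC N loc X \<le> SC N loc Y + lam * SC N loc Zs"
    using assms(5) unfolding lambda_bounded_def by blast
  have one: "beats P Q \<Longrightarrow> SC N loc P / SC N loc Zs \<le>
              lam * distortion_I N loc C P / (distortion_I N loc C P - 1)"
  proof -
    assume b: "beats P Q"
    have "SC N loc P \<le> m + lam * SC N loc Zs" using lb[OF b] Q(2) by simp
    then show ?thesis unfolding d by (rule core[OF mpos Pgt _ sZ])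
  qed
  have pos: "beats P Q \<Longrightarrow> lam * distortion_I N loc C P / (distortion_I N loc C P - 1)
      \<le> 2 * lam * distortion_I N loc C P / (distortion_I N loc C P - 1)"
  proof -
    assume b: "beats P Q"
    have "lam * SC N loc Zs \<ge> SC N loc P - m" using lb[OF b] Q by simp
    hence "lam * SC N loc Zs > 0" using Pgt by linarith
    hence "lam > 0" using sZ by (metis mult_nonpos_nonneg not_le)
    moreover have "distortion_I N loc C P > 0" using assms(8) by simp
    ultimately have "lam * distortion_I N loc C P \<le> 2 * lam * distortion_I N loc C P"
      by simp
    moreover have "distortion_I N loc C P - 1 \<ge> 0" using assms(8) by simp
    ultimately show ?thesis by (rule divide_right_mono)
  qed
  have two: "uncovered C beats P \<longrightarrow>
            SC N loc P / SC N loc Zs \<le>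
              2 * lam * distortion_I N loc C P / (distortion_I N loc C P - 1)"
  proof
    assume "uncovered C beats P"
    then have "beats P Q \<or> (\<exists>Y\<in>C. beats P Y \<and> beats Y Q)"
      unfolding uncovered_def using Q QP by auto
    then show "SC N loc P / SC N loc Zs \<le>
              2 * lam * distortion_I N loc C P / (distortion_I N loc C P - 1)"
    proof
      assume b: "beats P Q" show ?thesis using one[OF b] pos[OF b] by (rule order_trans)
    next
      assume "\<exists>Y\<in>C. beats P Y \<and> beats Y Q"
      then obtain Y where "beats P Y" "beats Y Q" by auto
      then have "SC N loc P \<le> SC N loc Y + lam * SC N loc Zs" "SC N loc Y \<le> m + lam * SC N loc Zs"
        using lb Q by auto
      then have "SC N loc P \<le> m + (2*lam) * SC N loc Zs" by linarith
      then show ?thesis unfolding d using core[OF mpos Pgt _ sZ, of "2*lam"] by (simp only: mult.assoc)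
    qed
  qed
  have "card C = 2 \<and> (\<forall>Q\<in>C. Q \<noteq> P \<longrightarrow> beats P Q) \<Longrightarrow> beats P Q"
    using Q QP by blast
  then show ?thesis using one two by (intro conjI impI) auto
qed

end
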